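(* Let $F:\mathbb{R}^d\times\Xi\to\mathbb{R}$, let $\xi$ have law $P$ on $\Xi$, and let $f(\bm{x}):=\mathbb{E}[F(\bm{x},\xi)]$ be finite. Suppose there is a measurable $\kappa_{FL}:\Xi\to[0,\infty)$ with $|F(\bm{x}_1,\xi)-F(\bm{x}_2,\xi)|\le\kappa_{FL}(\xi)\|\bm{x}_1-\bm{x}_2\|$ for all $\bm{x}_1,\bm{x}_2,\xi$, and that $\kappa_{Lm}:=\sup_{m\ge2}\big(\mathbb{E}[\kappa_{FL}(\xi)^m]\big)^{1/m}<\infty$. Let $\mathcal{F}_k=\mathcal{F}_{k,0}\subseteq\mathcal{F}_{k,1}\subseteq\cdots$ be $\sigma$-algebras, let $\Delta_k>0$ and $\bm{X}^0_k,\bm{X}^i_k\in\mathbb{R}^d$ be $\mathcal{F}_k$-measurable with $\|\bm{X}^0_k-\bm{X}^i_k\|\le\Delta_k$ and $|f(\bm{X}^0_k)-f(\bm{X}^i_k)|\le\kappa_{Lg}\Delta_k$ for a constant $\kappa_{Lg}>0$. Let $(\xi_{k,j})_{j\ge1}$ be random elements with law $P$ such that $\xi_{k,j}$ is $\mathcal{F}_{k,j}$-measurable and independent of $\mathcal{F}_{k,j-1}$. Define $E^l_{j}:=F(\bm{X}^l_k,\xi_{k,j})-f(\bm{X}^l_k)$ for $l\in\{0,i\}$ and $D_j:=E^0_j-E^i_j$. Set $b_C=\sigma_C=\kappa_{Lg}+\kappa_{Lm}$. Then for every $c>0$ and $n\in\mathbb{N}$, $$\mathbb{P}\Big(\sum_{j=1}^n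 D_j\ge nc\ \Big|\ \mathcal{F}_k\Big)\le\exp\Big\{-\frac{nc^2}{2(\Delta_kb_Cc+\Delta_k^2\sigma_C^2)}\Big\}\quad\text{a.s.}$$
   Context: This is the common-random-numbers setting: both points $\bm{X}^0_k$ and $\bm{X}^i_k$ are evaluated with the same random element $\xi_{k,j}$ in the $j$-th observation. $\|\cdot\|$ is the Euclidean norm. *)

theory Defs
  imports "HOL-Probability.Probability"
begin

definition kappa_Lm :: "'b measure \<Rightarrow> ('b \<Rightarrow> real) \<Rightarrow> real" where
  "kappa_Lm P \<kappa> = (SUP m\<in>{2::nat..}. (\<integral>s. \<kappa> s ^ m \<partial>P) powr (1 / real m))"

end

theory Submission
  imports Defs
begin

lemma powr_inv_pow: assumes "x \<ge> (0::real)" "m > 0" shows "(x powr (1/real m)) ^ m = x"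
proof (cases "x = 0")
  case True then show ?thesis using assms by simp
next
  case False
  then have "x > 0" using assms by simp
  then have "(x powr (1/real m)) ^ m = (x powr (1/real m)) powr real m" by (simp add: powr_realpow)
  also have "\<dots> = x" using assms by (simp add: powr_powr)
  finally show ?thesis .
qed

lemma mom_bound:
  assumes P: "prob_space P" and km: "\<kappa> \<in> borel_measurable P" and k0: "\<And>s. s\<in>space P \<Longrightarrow> \<kappa> s \<ge> 0"
  and mi: "\<And>m::nat. m\<ge>2 \<Longrightarrow> integrable P (\<lambda>s. \<kappa> s ^ m)"
  and bdd: "bdd_above ((\<lambda>m::nat. (\<integral>s. \<kappa> s ^ m \<partial>P) powr (1/real m)) ` {2..})"
  shows "kappa_Lm P \<kappa> \<ge> 0" "\<And>m. integrable P (\<lambda>s. \<kappa> s ^ m)" "\<And>m. (\<integral>s. \<kappa> s ^ m \<partial>P) \<le> kappa_Lm P \<kappa> ^ m"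
proof -
  interpret prob_space P by (rule P)
  let ?K = "kappa_Lm P \<kappa>"
  have i2: "integrable P (\<lambda>s. \<kappa> s ^ 2)" using mi by simp
  have i1: "integrable P \<kappa>" using km i2 by (rule square_integrable_imp_integrable)
  show im: "integrable P (\<lambda>s. \<kappa> s ^ m)" for m
  proof (cases "m \<ge> 2")
    case True then show ?thesis by (rule mi)
  next
    case False then have "m = 0 \<or> m = 1" by auto
    then show ?thesis using i1 by auto
  qed
  have hi: "(\<integral>s. \<kappa> s ^ m \<partial>P) \<le> ?K ^ m" if m: "m \<ge> 2" for m
  proof -
    have le: "(\<integral>s. \<kappa> s ^ m \<partial>P) powr (1/real m) \<le> ?K"
      unfolding kappa_Lm_def using bdd m by (intro cSUP_upper) auto
    have nn: "(\<integral>s. \<kappa> s ^ m \<partial>P) \<ge> 0" using k0 by (intro integral_nonneg_AE) auto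
    have "(\<integral>s. \<kappa> s ^ m \<partial>P) = ((\<integral>s. \<kappa> s ^ m \<partial>P) powr (1/real m)) ^ m"
      using nn m by (simp add: powr_inv_pow)
    also have "\<dots> \<le> ?K ^ m" using le by (intro power_mono) auto
    finally show ?thesis .
  qed
  show K0: "?K \<ge> 0"
  proof -
    have "(\<integral>s. \<kappa> s ^ 2 \<partial>P) powr (1/real 2) \<le> ?K"
      unfolding kappa_Lm_def using bdd by (intro cSUP_upper) auto
    moreover have "(\<integral>s. \<kappa> s ^ 2 \<partial>P) powr (1/real 2) \<ge> 0" by simp
    ultimately show ?thesis by linarith
  qed
  show "(\<integral>s. \<kappa> s ^ m \<partial>P) \<le> ?K ^ m" for m
  proof -
    consider "m = 0" | "m = 1" | "m \<ge> 2" by linarith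
    then show ?thesis
    proof cases
      case 1 then show ?thesis by (simp add: prob_space)
    next
      case 2
      have "(\<integral>s. \<kappa> s \<partial>P)\<^sup>2 \<le> (\<integral>s. \<kappa> s ^ 2 \<partial>P)"
        using variance_eq[OF i1 i2] variance_positive[of \<kappa>] by linarith
      also have "\<dots> \<le> ?K ^ 2" using hi by simp
      finally have "(\<integral>s. \<kappa> s \<partial>P)\<^sup>2 \<le> ?K ^ 2" .
      then have "(\<integral>s. \<kappa> s \<partial>P) \<le> ?K" using K0 by (rule power2_le_imp_le)
      then show ?thesis using 2 by simp
    next
      case 3 then show ?thesis by (rule hi)
    qed
  qed
qed


lemma lip_comp_meas:
  fixes F :: "'x::euclidean_space \<Rightarrow> 'b \<Rightarrow> real"
  assumes Fm: "\<And>x. F x \<in> borel_measurable P"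
   and km: "\<kappa> \<in> borel_measurable P"
   and Lip: "\<And>x1 x2 s. s \<in> space P \<Longrightarrow> \<bar>F x1 s - F x2 s\<bar> \<le> \<kappa> s * norm (x1 - x2)"
   and k0: "\<And>s. s \<in> space P \<Longrightarrow> \<kappa> s \<ge> 0"
   and Y: "Y \<in> borel_measurable N" and Z: "Z \<in> measurable N P"
  shows "(\<lambda>\<omega>. F (Y \<omega>) (Z \<omega>)) \<in> borel_measurable N"
proof -
  obtain D :: "'x set" where D: "countable D" "\<And>X. open X \<Longrightarrow> X \<noteq> {} \<Longrightarrow> \<exists>d \<in> D. d \<in> X"
    using countable_dense_setE by blast
  have eq: "F x s = (INF r\<in>D. F r s + \<kappa> s * norm (x - r))" if s: "s \<in> space P" for x s
  proof -
    have ge: "F x s \<le> F r s + \<kappa> s * norm (x - r)" for r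
      using Lip[OF s, of x r] by linarith
    have bdd: "bdd_below ((\<lambda>r. F r s + \<kappa> s * norm (x - r)) ` D)"
      by (intro bdd_belowI2[where m="F x s"]) (rule ge)
    have De: "D \<noteq> {}" using D(2)[of UNIV] by auto
    show ?thesis
    proof (rule antisym)
      show "F x s \<le> (INF r\<in>D. F r s + \<kappa> s * norm (x - r))"
        using De ge by (intro cINF_greatest) auto
      show "(INF r\<in>D. F r s + \<kappa> s * norm (x - r)) \<le> F x s"
      proof (rule field_le_epsilon)
        fix e :: real assume e: "0 < e"
        note k0 = k0[OF s]
        define d where "d = e / (2 * (\<kappa> s + 1))"
        have d: "d > 0" using e k0 by (simp add: d_def)
        obtain r where r: "r \<in> D" "r \<in> ball x d" using D(2)[of "ball x d"] d by auto
        have nr: "norm (x - r) < d" using r(2) by (simp add: dist_norm)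
        have "(INF r\<in>D. F r s + \<kappa> s * norm (x - r)) \<le> F r s + \<kappa> s * norm (x - r)"
          using bdd r(1) by (rule cINF_lower)
        also have "\<dots> \<le> F x s + 2 * \<kappa> s * norm (x - r)"
          using Lip[OF s, of r x] by (simp add: norm_minus_commute)
        also have "\<dots> \<le> F x s + 2 * \<kappa> s * d"
          using nr k0 by (simp add: mult_left_mono)
        also have "\<dots> \<le> F x s + e"
        proof -
          have "2 * \<kappa> s * d = e * (\<kappa> s / (\<kappa> s + 1))" using k0 by (simp add: d_def field_simps)
          also have "\<dots> \<le> e * 1" using e k0 by (intro mult_left_mono) simp_all
          finally show ?thesis by simp
        qed
        finally show "(INF r\<in>D. F r s + \<kappa> s * norm (x - r)) \<le> F x s + e" .
      qed
    qed
  qed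
  have "(\<lambda>\<omega>. INF r\<in>D. F r (Z \<omega>) + \<kappa> (Z \<omega>) * norm (Y \<omega> - r)) \<in> borel_measurable N"
  proof (rule borel_measurable_cINF_real[OF D(1)])
    fix r
    show "(\<lambda>\<omega>. F r (Z \<omega>) + \<kappa> (Z \<omega>) * norm (Y \<omega> - r)) \<in> borel_measurable N"
      using Fm[of r] km Y Z by measurable
  qed
  moreover have "\<And>\<omega>. \<omega> \<in> space N \<Longrightarrow> F (Y \<omega>) (Z \<omega>) = (INF r\<in>D. F r (Z \<omega>) + \<kappa> (Z \<omega>) * norm (Y \<omega> - r))"
    using eq measurable_space[OF Z] by blast
  ultimately show ?thesis by (subst measurable_cong) assumption+
qed



lemma freeze:
  assumes M: "prob_space M" and P: "prob_space P"
  and sub: "subalgebra M G"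
  and xm: "\<xi> \<in> measurable M P" and law: "distr M P \<xi> = P"
  and ind: "prob_space.indep_set M (sets G) {\<xi> -` A \<inter> space M | A. A \<in> sets P}"
  and h: "h \<in> borel_measurable (G \<Otimes>\<^sub>M P)"
  shows "(\<integral>\<^sup>+\<omega>. h (\<omega>, \<xi> \<omega>) \<partial>M) = (\<integral>\<^sup>+\<omega>. (\<integral>\<^sup>+s. h (\<omega>, s) \<partial>P) \<partial>M)"
proof -
  interpret prob_space M by (rule M)
  interpret P: prob_space P by (rule P)
  have spG: "space G = space M" and sG: "sets G \<subseteq> sets M" using sub by (auto simp: subalgebra_def)
  have idm: "(\<lambda>x. x) \<in> measurable M G"
    by (rule measurableI) (use spG sG in auto)
  have pm: "(\<lambda>x. (x, \<xi> x)) \<in> measurable M (G \<Otimes>\<^sub>M P)"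
    using idm xm by (rule measurable_Pair)
  have pG: "prob_space (distr M G id)" using idm by (intro prob_space_distr) (simp add: id_def)
  have deq: "distr M G id \<Otimes>\<^sub>M P = distr M (G \<Otimes>\<^sub>M P) (\<lambda>x. (x, \<xi> x))"
  proof (rule pair_measure_eqI)
    show "sigma_finite_measure (distr M G id)" using pG by (rule prob_space_imp_sigma_finite)
    show "sigma_finite_measure P" using P by (rule prob_space_imp_sigma_finite)
    show "sets (distr M G id \<Otimes>\<^sub>M P) = sets (distr M (G \<Otimes>\<^sub>M P) (\<lambda>x. (x, \<xi> x)))"
      unfolding sets_distr by (rule sets_pair_measure_cong) simp_all
    fix A B assume A: "A \<in> sets (distr M G id)" and B: "B \<in> sets P"
    have AG: "A \<in> sets G" using A by simp
    have AM: "A \<in> sets M" using AG sG by auto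
    have AS: "A \<subseteq> space M" using AM sets.sets_into_space by blast
    have BM: "\<xi> -` B \<inter> space M \<in> {\<xi> -` A \<inter> space M | A. A \<in> sets P}" using B by blast
    have BM': "\<xi> -` B \<inter> space M \<in> sets M" using xm B by measurable
    have pr: "prob (A \<inter> (\<xi> -` B \<inter> space M)) = prob A * prob (\<xi> -` B \<inter> space M)"
      using ind AG BM unfolding indep_sets2_eq by blast
    have e1: "emeasure (distr M G id) A = emeasure M A"
      using idm AG by (subst emeasure_distr) (auto simp: id_def spG Int_absorb2 AS)
    have e2: "emeasure P B = emeasure M (\<xi> -` B \<inter> space M)"
      using law xm B by (metis emeasure_distr)
    have e3: "emeasure (distr M (G \<Otimes>\<^sub>M P) (\<lambda>x. (x, \<xi> x))) (A \<times> B) = emeasure M (A \<inter> (\<xi> -` B \<inter> space M))"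
    proof -
      have "A \<times> B \<in> sets (G \<Otimes>\<^sub>M P)" using AG B by auto
      then have "emeasure (distr M (G \<Otimes>\<^sub>M P) (\<lambda>x. (x, \<xi> x))) (A \<times> B) = emeasure M ((\<lambda>x. (x, \<xi> x)) -` (A \<times> B) \<inter> space M)"
        by (rule emeasure_distr[OF pm])
      also have "(\<lambda>x. (x, \<xi> x)) -` (A \<times> B) \<inter> space M = A \<inter> (\<xi> -` B \<inter> space M)" using AS by auto
      finally show ?thesis .
    qed
    show "emeasure (distr M G id) A * emeasure P B = emeasure (distr M (G \<Otimes>\<^sub>M P) (\<lambda>x. (x, \<xi> x))) (A \<times> B)"
      unfolding e1 e2 e3 using pr AM BM' by (simp add: emeasure_eq_measure ennreal_mult)
  qed
  have "(\<integral>\<^sup>+\<omega>. h (\<omega>, \<xi> \<omega>) \<partial>M) = integral\<^sup>N (distr M (G \<Otimes>\<^sub>M P) (\<lambda>x. (x, \<xi> x))) h"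
    using pm h by (subst nn_integral_distr) auto
  also have "\<dots> = integral\<^sup>N (distr M G id \<Otimes>\<^sub>M P) h"
    using deq by simp
  also have "\<dots> = (\<integral>\<^sup>+ x. \<integral>\<^sup>+ y. h (x, y) \<partial>P \<partial>(distr M G id))"
    using h by (subst P.nn_integral_fst[symmetric]) (auto simp: id_def)
  also have "\<dots> = (\<integral>\<^sup>+\<omega>. (\<integral>\<^sup>+s. h (\<omega>, s) \<partial>P) \<partial>M)"
  proof -
    have "(\<lambda>x. \<integral>\<^sup>+ y. h (x, y) \<partial>P) \<in> borel_measurable G"
      using h by (rule P.borel_measurable_nn_integral_fst)
    then show ?thesis using idm by (subst nn_integral_distr) (auto simp: id_def)
  qed
  finally show ?thesis .
qed



lemma tail_sums: "(\<lambda>n. y^(n+2)/fact(n+2)) sums (exp y - 1 - (y::real))"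
proof -
  have "(\<lambda>n. y^n / fact n) sums exp y" using exp_converges[of y] by (simp add: divide_inverse mult.commute)
  from sums_split_initial_segment[OF this, of 2] show ?thesis by (simp add: numeral_2_eq_2 diff_diff_eq)
qed

lemma tail_le: assumes "\<bar>x\<bar> \<le> (y::real)" shows "exp x - 1 - x \<le> exp y - 1 - y"
proof (rule sums_le[OF _ tail_sums tail_sums])
  fix n
  have "x^(n+2) \<le> \<bar>x\<bar>^(n+2)" by (metis abs_ge_self power_abs)
  also have "\<dots> \<le> y^(n+2)" using assms by (intro power_mono) auto
  finally show "x^(n+2)/fact(n+2) \<le> y^(n+2)/fact(n+2)" by (intro divide_right_mono) auto
qed

lemma tail_geo: assumes "0 \<le> a" "a < (1::real)" shows "exp a - 1 - a \<le> a\<^sup>2 / (2 * (1 - a))"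
proof -
  have g: "(\<lambda>n. a\<^sup>2/2 * a^n) sums (a\<^sup>2/2 * (1 / (1 - a)))"
    using assms by (intro sums_mult geometric_sums) auto
  have "exp a - 1 - a \<le> a\<^sup>2/2 * (1 / (1 - a))"
  proof (rule sums_le[OF _ tail_sums g])
    fix n
    have f2: "fact (n+2) \<ge> (2::real)"
    proof -
      have "fact 2 \<le> (fact (n+2) :: real)" by (intro fact_mono) auto
      then show ?thesis by simp
    qed
    have "a^(n+2)/fact(n+2) \<le> a^(n+2)/2"
      using f2 assms by (intro divide_left_mono) auto
    also have "\<dots> = a\<^sup>2/2 * a^n" by (simp add: power_add power2_eq_square)
    finally show "a^(n+2)/fact(n+2) \<le> a\<^sup>2/2 * a^n" .
  qed
  also have "\<dots> = a\<^sup>2 / (2 * (1 - a))" by simp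
  finally show ?thesis .
qed

lemma mgf_bound:
  fixes F :: "'x::euclidean_space \<Rightarrow> 'b \<Rightarrow> real"
  assumes P: "prob_space P" and F_int: "\<And>x. integrable P (F x)"
  and fdef: "\<And>x. f x = (\<integral>s. F x s \<partial>P)"
  and km: "\<kappa> \<in> borel_measurable P" and k0: "\<And>s. s \<in> space P \<Longrightarrow> \<kappa> s \<ge> 0"
  and Lip: "\<And>x1 x2 s. s \<in> space P \<Longrightarrow> \<bar>F x1 s - F x2 s\<bar> \<le> \<kappa> s * norm (x1 - x2)"
  and ki: "\<And>m. integrable P (\<lambda>s. \<kappa> s ^ m)" and kb: "\<And>m. (\<integral>s. \<kappa> s ^ m \<partial>P) \<le> K ^ m" and K0: "K \<ge> 0"
  and L0: "L \<ge> 0" and D0: "\<Delta> \<ge> 0" and dx: "norm (x0 - xi) \<le> \<Delta>"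
  and df: "\<bar>f x0 - f xi\<bar> \<le> L * \<Delta>"
  and l0: "l \<ge> 0" and a1: "l * \<Delta> * (L + K) < 1"
  shows "(\<integral>\<^sup>+s. ennreal (exp (l * ((F x0 s - f x0) - (F xi s - f xi)))) \<partial>P)
     \<le> ennreal (exp ((l * \<Delta> * (L + K))\<^sup>2 / (2 * (1 - l * \<Delta> * (L + K)))))"
proof -
  interpret prob_space P by (rule P)
  define t where "t = l * \<Delta>"
  define a where "a = t * (L + K)"
  define G where "G s = l * ((F x0 s - f x0) - (F xi s - f xi))" for s
  define Y where "Y s = t * (\<kappa> s + L)" for s
  define T where "T y = exp y - 1 - y" for y :: real
  define q where "q = a\<^sup>2 / (2 * (1 - a))"
  have t0: "t \<ge> 0" using l0 D0 by (simp add: t_def)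
  have a0: "a \<ge> 0" using t0 L0 K0 by (simp add: a_def)
  have a1': "a < 1" using a1 by (simp add: a_def t_def)
  have q0: "q \<ge> 0" using a0 a1' by (simp add: q_def)
  have Fm: "F x \<in> borel_measurable P" for x using F_int by auto
  have Gb: "\<bar>G s\<bar> \<le> Y s" if s: "s \<in> space P" for s
  proof -
    have "\<bar>F x0 s - F xi s\<bar> \<le> \<kappa> s * \<Delta>"
      using Lip[OF s, of x0 xi] dx k0[OF s] by (meson mult_left_mono order_trans)
    then have "\<bar>(F x0 s - f x0) - (F xi s - f xi)\<bar> \<le> \<kappa> s * \<Delta> + L * \<Delta>" using df by linarith
    then have "l * \<bar>(F x0 s - f x0) - (F xi s - f xi)\<bar> \<le> l * (\<kappa> s * \<Delta> + L * \<Delta>)"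
      using l0 by (intro mult_left_mono)
    moreover have "\<bar>G s\<bar> = l * \<bar>(F x0 s - f x0) - (F xi s - f xi)\<bar>" using l0 by (simp add: G_def abs_mult)
    moreover have "l * (\<kappa> s * \<Delta> + L * \<Delta>) = Y s" by (simp add: Y_def t_def algebra_simps)
    ultimately show ?thesis by simp
  qed
  have Y0: "Y s \<ge> 0" if "s \<in> space P" for s using t0 L0 k0[OF that] by (simp add: Y_def)
  have Ym: "Y \<in> borel_measurable P" unfolding Y_def using km by measurable
  have Yint: "integrable P (\<lambda>s. Y s ^ m) \<and> (\<integral>s. Y s ^ m \<partial>P) \<le> a ^ m" for m
  proof -
    have eq: "Y s ^ m = (\<Sum>k\<le>m. t ^ m * (real (m choose k) * L ^ (m - k)) * \<kappa> s ^ k)" for s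
      unfolding Y_def power_mult_distrib binomial_ring[of "\<kappa> s" L m] sum_distrib_left
      by (intro sum.cong) (auto simp: algebra_simps)
    have ints: "integrable P (\<lambda>s. \<Sum>k\<le>m. t ^ m * (real (m choose k) * L ^ (m - k)) * \<kappa> s ^ k)"
      by (intro Bochner_Integration.integrable_sum integrable_mult_right ki)
    have "(\<integral>s. (\<Sum>k\<le>m. t ^ m * (real (m choose k) * L ^ (m - k)) * \<kappa> s ^ k) \<partial>P)
        = (\<Sum>k\<le>m. t ^ m * (real (m choose k) * L ^ (m - k)) * (\<integral>s. \<kappa> s ^ k \<partial>P))"
      by (subst Bochner_Integration.integral_sum) (auto intro!: integrable_mult_right ki)
    also have "\<dots> \<le> (\<Sum>k\<le>m. t ^ m * (real (m choose k) * L ^ (m - k)) * K ^ k)"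
      using kb t0 L0 by (intro sum_mono mult_left_mono) auto
    also have "\<dots> = t ^ m * (K + L) ^ m"
      unfolding binomial_ring[of K L m] sum_distrib_left by (intro sum.cong) (auto simp: algebra_simps)
    also have "\<dots> = a ^ m" by (simp add: a_def power_mult_distrib add.commute)
    finally show ?thesis using ints by (simp add: eq)
  qed
  have TYs: "(\<lambda>n. Y s^(n+2)/fact(n+2)) sums T (Y s)" for s unfolding T_def by (rule tail_sums)
  have nnT: "(\<integral>\<^sup>+s. ennreal (T (Y s)) \<partial>P) \<le> ennreal q"
  proof -
    have "(\<integral>\<^sup>+s. ennreal (T (Y s)) \<partial>P) = (\<integral>\<^sup>+s. (\<Sum>n. ennreal (Y s^(n+2)/fact(n+2))) \<partial>P)"
      using Y0 TYs by (intro nn_integral_cong suminf_ennreal_eq[symmetric]) auto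
    also have "\<dots> = (\<Sum>n. (\<integral>\<^sup>+s. ennreal (Y s^(n+2)/fact(n+2)) \<partial>P))"
      by (intro nn_integral_suminf measurable_compose[OF _ measurable_ennreal] borel_measurable_divide borel_measurable_power Ym) simp
    also have "\<dots> \<le> (\<Sum>n. ennreal (a^(n+2)/fact(n+2)))"
    proof (intro suminf_le summableI)
      fix n
      have "(\<integral>\<^sup>+s. ennreal (Y s^(n+2)/fact(n+2)) \<partial>P) = ennreal (\<integral>s. Y s^(n+2)/fact(n+2) \<partial>P)"
        using Yint[of "n+2"] Y0 by (intro nn_integral_eq_integral) auto
      also have "\<dots> \<le> ennreal (a^(n+2)/fact(n+2))"
      proof (intro ennreal_leI)
        have "(\<integral>s. Y s^(n+2)/fact(n+2) \<partial>P) = (\<integral>s. Y s^(n+2) \<partial>P) / fact(n+2)" by simp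
        also have "\<dots> \<le> a^(n+2)/fact(n+2)"
          using Yint[of "n+2"] by (intro divide_right_mono) (simp_all only: fact_ge_zero)
        finally show "(\<integral>s. Y s^(n+2)/fact(n+2) \<partial>P) \<le> a^(n+2)/fact(n+2)" .
      qed
      finally show "(\<integral>\<^sup>+s. ennreal (Y s^(n+2)/fact(n+2)) \<partial>P) \<le> ennreal (a^(n+2)/fact(n+2))" .
    qed
    also have "\<dots> = ennreal (T a)"
      using a0 tail_sums[of a] by (intro suminf_ennreal_eq) (auto simp: T_def)
    also have "\<dots> \<le> ennreal q" using tail_geo[OF a0 a1'] unfolding T_def q_def by (rule ennreal_leI)
    finally show ?thesis .
  qed
  have Tm: "(\<lambda>s. T (Y s)) \<in> borel_measurable P" unfolding T_def using Ym by measurable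
  have TY0: "T (Y s) \<ge> 0" if "s \<in> space P" for s
    using tail_le[of 0 "Y s"] Y0[OF that] by (simp add: T_def)
  have Tint: "integrable P (\<lambda>s. T (Y s))"
    using Tm TY0 nnT by (intro integrableI_nonneg) (auto simp: top.not_eq_extremum intro: le_less_trans)
  have ITq: "(\<integral>s. T (Y s) \<partial>P) \<le> q"
  proof -
    have "ennreal (\<integral>s. T (Y s) \<partial>P) = (\<integral>\<^sup>+s. ennreal (T (Y s)) \<partial>P)"
      using Tint TY0 by (intro nn_integral_eq_integral[symmetric]) auto
    then show ?thesis using nnT q0 by (metis ennreal_le_iff)
  qed
  have Gint: "integrable P G" unfolding G_def using F_int by auto
  have IG: "(\<integral>s. G s \<partial>P) = 0"
    unfolding G_def using F_int by (simp add: fdef prob_space)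
  have pw: "exp (G s) \<le> 1 + G s + T (Y s)" if "s \<in> space P" for s
    using tail_le[OF Gb[OF that]] by (simp add: T_def)
  have "(\<integral>\<^sup>+s. ennreal (exp (G s)) \<partial>P) \<le> (\<integral>\<^sup>+s. ennreal (1 + G s + T (Y s)) \<partial>P)"
    using pw by (intro nn_integral_mono ennreal_leI) auto
  also have "\<dots> = ennreal (\<integral>s. 1 + G s + T (Y s) \<partial>P)"
    using Gint Tint pw by (intro nn_integral_eq_integral) (auto intro: order_trans[OF less_imp_le[OF exp_gt_zero]])
  also have "(\<integral>s. 1 + G s + T (Y s) \<partial>P) = 1 + (\<integral>s. T (Y s) \<partial>P)"
    using Gint Tint IG by (simp add: prob_space)
  also have "ennreal (1 + (\<integral>s. T (Y s) \<partial>P)) \<le> ennreal (exp q)"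
    using ITq exp_ge_add_one_self[of q] by (intro ennreal_leI) linarith
  finally show ?thesis unfolding G_def q_def a_def t_def .
qed




lemma psi_alg: fixes x c :: real assumes "x > 0" "c > 0"
  shows "(c/(x+c))\<^sup>2/(2*(1 - c/(x+c))) = c\<^sup>2/(2*x*(x+c))"
proof -
  have h: "1 - c/(x+c) = x/(x+c)" using assms by (simp add: field_simps)
  have p: "x + c > 0" using assms by simp
  show ?thesis unfolding h using assms p by (simp add: power2_eq_square divide_simps)
qed

lemma ex_alg0: fixes q c N S :: real assumes "q > 0"
  shows "- (N * c\<^sup>2) / (2 * q) + (c / q * S - N * (c\<^sup>2 / (2 * q))) = c / q * (S - N * c)"
  using assms by (simp add: field_simps power2_eq_square)
lemma ex_alg: fixes x c N S :: real assumes "x > 0" "c > 0"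
  shows "- (N * c\<^sup>2) / (2 * (x * (x + c))) + (c / (x * (x + c)) * S - N * (c\<^sup>2 / (2 * x * (x + c))))
     = c / (x * (x + c)) * (S - N * c)"
proof -
  have q: "x * (x + c) > 0" using assms by simp
  have e: "c\<^sup>2 / (2 * x * (x + c)) = c\<^sup>2 / (2 * (x * (x + c)))" by (simp add: mult.assoc)
  show ?thesis unfolding e by (rule ex_alg0[OF q])
qed

theorem lemma2:
  fixes M :: "'a measure" and P :: "'b measure"
    and F :: "'x::euclidean_space \<Rightarrow> 'b \<Rightarrow> real"
    and \<kappa>FL :: "'b \<Rightarrow> real" and \<kappa>Lg :: real
    and Fk :: "nat \<Rightarrow> 'a measure"
    and \<Delta> :: "'a \<Rightarrow> real" and X0 Xi :: "'a \<Rightarrow> 'x"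
    and \<xi> :: "nat \<Rightarrow> 'a \<Rightarrow> 'b"
    and c :: real and n :: nat
  defines "f \<equiv> (\<lambda>x. \<integral>s. F x s \<partial>P)"
  assumes M: "prob_space M" and P: "prob_space P"
    and F_int: "\<And>x. integrable P (F x)"
    and \<kappa>FL_meas: "\<kappa>FL \<in> borel_measurable P"
    and \<kappa>FL_nonneg: "\<And>s. s \<in> space P \<Longrightarrow> \<kappa>FL s \<ge> 0"
    and F_Lip: "\<And>x1 x2 s. s \<in> space P \<Longrightarrow> \<bar>F x1 s - F x2 s\<bar> \<le> \<kappa>FL s * norm (x1 - x2)"
    and \<kappa>_mom_int: "\<And>m::nat. m \<ge> 2 \<Longrightarrow> integrable P (\<lambda>s. \<kappa>FL s ^ m)"
    and \<kappa>_mom_bdd: "bdd_above ((\<lambda>m::nat. (\<integral>s. \<kappa>FL s ^ m \<partial>P) powr (1 / real m)) ` {2..})"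
    and sub: "\<And>j. subalgebra M (Fk j)"
    and filt: "\<And>j. sets (Fk j) \<subseteq> sets (Fk (Suc j))"
    and \<Delta>_meas: "\<Delta> \<in> borel_measurable (Fk 0)"
    and \<Delta>_pos: "\<And>\<omega>. \<omega> \<in> space M \<Longrightarrow> \<Delta> \<omega> > 0"
    and X0_meas: "X0 \<in> borel_measurable (Fk 0)"
    and Xi_meas: "Xi \<in> borel_measurable (Fk 0)"
    and X_dist: "\<And>\<omega>. \<omega> \<in> space M \<Longrightarrow> norm (X0 \<omega> - Xi \<omega>) \<le> \<Delta> \<omega>"
    and \<kappa>Lg_pos: "\<kappa>Lg > 0"
    and f_diff: "\<And>\<omega>. \<omega> \<in> space M \<Longrightarrow> \<bar>f (X0 \<omega>) - f (Xi \<omega>)\<bar> \<le> \<kappa>Lg * \<Delta> \<omega>"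
    and \<xi>_meas: "\<And>j. j \<ge> 1 \<Longrightarrow> \<xi> j \<in> measurable (Fk j) P"
    and \<xi>_law: "\<And>j. j \<ge> 1 \<Longrightarrow> distr M P (\<xi> j) = P"
    and \<xi>_indep: "\<And>j. j \<ge> 1 \<Longrightarrow>
        prob_space.indep_set M (sets (Fk (j - 1))) {\<xi> j -` A \<inter> space M | A. A \<in> sets P}"
    and c_pos: "c > 0"
  shows "AE \<omega> in M.
     real_cond_exp M (Fk 0)
       (indicator {\<omega>\<in>space M.
          (\<Sum>j=1..n. (F (X0 \<omega>) (\<xi> j \<omega>) - f (X0 \<omega>)) - (F (Xi \<omega>) (\<xi> j \<omega>) - f (Xi \<omega>)))
            \<ge> real n * c}) \<omega>
     \<le> exp (- (real n * c\<^sup>2) /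
          (2 * (\<Delta> \<omega> * (\<kappa>Lg + kappa_Lm P \<kappa>FL) * c + (\<Delta> \<omega>)\<^sup>2 * (\<kappa>Lg + kappa_Lm P \<kappa>FL)\<^sup>2)))"
proof -
  interpret M: prob_space M by (rule M)
  interpret P: prob_space P by (rule P)
  define K where "K = kappa_Lm P \<kappa>FL"
  define \<sigma> where "\<sigma> = \<kappa>Lg + K"
  note mb = mom_bound[OF P \<kappa>FL_meas \<kappa>FL_nonneg \<kappa>_mom_int \<kappa>_mom_bdd]
  have K0: "K \<ge> 0" using mb(1) K_def by simp
  have ki: "\<And>m. integrable P (\<lambda>s. \<kappa>FL s ^ m)" by (rule mb(2))
  have kb: "\<And>m. (\<integral>s. \<kappa>FL s ^ m \<partial>P) \<le> K ^ m" unfolding K_def by (rule mb(3))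
  have \<sigma>0: "\<sigma> > 0" using K0 \<kappa>Lg_pos \<sigma>_def by simp
  have Fm: "\<And>x. F x \<in> borel_measurable P" using F_int by auto
  have fdef: "\<And>x. f x = (\<integral>s. F x s \<partial>P)" by (simp add: f_def)
  have spc: "\<And>j. space (Fk j) = space M" and sM: "\<And>j. sets (Fk j) \<subseteq> sets M"
    using sub by (auto simp: subalgebra_def)
  have mono0: "sets (Fk i) \<subseteq> sets (Fk (i + d))" for i d
    by (induction d) (use filt in auto)
  have mono: "i \<le> j \<Longrightarrow> sets (Fk i) \<subseteq> sets (Fk j)" for i j
    using mono0[of i "j - i"] by simp
  have subF: "i \<le> j \<Longrightarrow> subalgebra (Fk j) (Fk i)" for i j
    unfolding subalgebra_def using spc mono by auto
  have lift: "i \<le> j \<Longrightarrow> g \<in> measurable (Fk i) N \<Longrightarrow> g \<in> measurable (Fk j) N" for g N i j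
    using measurable_from_subalg[OF subF] by blast
  have liftM: "g \<in> measurable (Fk i) N \<Longrightarrow> g \<in> measurable M N" for g N i
    using measurable_from_subalg[OF sub] by blast
  have Fcomp: "Y \<in> borel_measurable N \<Longrightarrow> Z \<in> measurable N P \<Longrightarrow> (\<lambda>\<omega>. F (Y \<omega>) (Z \<omega>)) \<in> borel_measurable N"
    for N :: "'c measure" and Y Z
    using lip_comp_meas[OF Fm \<kappa>FL_meas F_Lip \<kappa>FL_nonneg] by blast
  have fcomp: "(\<lambda>\<omega>. f (Y \<omega>)) \<in> borel_measurable N" if Y: "Y \<in> borel_measurable N" for N :: "'c measure" and Y
  proof -
    have Y': "(\<lambda>p. Y (fst p)) \<in> borel_measurable (N \<Otimes>\<^sub>M P)" using Y by measurable
    have "(\<lambda>p. F (Y (fst p)) (snd p)) \<in> borel_measurable (N \<Otimes>\<^sub>M P)"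
      by (rule Fcomp[OF Y' measurable_snd])
    then have "(\<lambda>\<omega>. \<integral>s. F (Y \<omega>) s \<partial>P) \<in> borel_measurable N"
      by (intro P.borel_measurable_lebesgue_integral) (simp add: case_prod_unfold)
    then show ?thesis by (simp add: fdef)
  qed
  define Dt where "Dt \<omega> s = (F (X0 \<omega>) s - f (X0 \<omega>)) - (F (Xi \<omega>) s - f (Xi \<omega>))" for \<omega> s
  define S where "S k \<omega> = (\<Sum>j=1..k. Dt \<omega> (\<xi> j \<omega>))" for k \<omega>
  define a where "a \<omega> = c / (\<Delta> \<omega> * \<sigma> + c)" for \<omega>
  define lam where "lam \<omega> = a \<omega> / (\<Delta> \<omega> * \<sigma>)" for \<omega>
  define \<psi> where "\<psi> \<omega> = (lam \<omega> * \<Delta> \<omega> * (\<kappa>Lg + K))\<^sup>2 / (2 * (1 - lam \<omega> * \<Delta> \<omega> * (\<kappa>Lg + K)))" for \<omega>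
  define g where "g \<omega> = exp (- (real n * c\<^sup>2) / (2 * (\<Delta> \<omega> * \<sigma> * c + (\<Delta> \<omega>)\<^sup>2 * \<sigma>\<^sup>2)))" for \<omega>
  have lamm: "lam \<in> borel_measurable (Fk 0)" unfolding lam_def a_def using \<Delta>_meas by measurable
  have \<psi>m: "\<psi> \<in> borel_measurable (Fk 0)" unfolding \<psi>_def using lamm \<Delta>_meas by measurable
  have gm: "g \<in> borel_measurable (Fk 0)" unfolding g_def using \<Delta>_meas by measurable
  have Dtm: "(\<lambda>p. Dt (fst p) (snd p)) \<in> borel_measurable (Fk k \<Otimes>\<^sub>M P)" for k
  proof -
    have X0k: "(\<lambda>p. X0 (fst p)) \<in> borel_measurable (Fk k \<Otimes>\<^sub>M P)" using lift[OF _ X0_meas, of k] by measurable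
    have Xik: "(\<lambda>p. Xi (fst p)) \<in> borel_measurable (Fk k \<Otimes>\<^sub>M P)" using lift[OF _ Xi_meas, of k] by measurable
    show ?thesis unfolding Dt_def
      by (intro borel_measurable_diff Fcomp fcomp X0k Xik measurable_snd)
  qed
  have Dm: "(\<lambda>\<omega>. Dt \<omega> (\<xi> j \<omega>)) \<in> borel_measurable (Fk k)" if "1 \<le> j" "j \<le> k" for j k
  proof -
    have xk: "\<xi> j \<in> measurable (Fk k) P" using lift[OF that(2) \<xi>_meas[OF that(1)]] .
    have X0k: "X0 \<in> borel_measurable (Fk k)" using lift[OF _ X0_meas, of k] by simp
    have Xik: "Xi \<in> borel_measurable (Fk k)" using lift[OF _ Xi_meas, of k] by simp
    show ?thesis unfolding Dt_def
      by (intro borel_measurable_diff Fcomp fcomp X0k Xik xk)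
  qed
  have Sm: "S k \<in> borel_measurable (Fk k)" for k
    unfolding S_def by (intro borel_measurable_sum Dm) auto
  have aprops: "0 \<le> a \<omega> \<and> a \<omega> < 1 \<and> lam \<omega> \<ge> 0 \<and> lam \<omega> * \<Delta> \<omega> * (\<kappa>Lg + K) = a \<omega>" if "\<omega> \<in> space M" for \<omega>
  proof -
    have d: "\<Delta> \<omega> > 0" using \<Delta>_pos[OF that] .
    have p: "\<Delta> \<omega> * \<sigma> > 0" using d \<sigma>0 by simp
    have a0: "0 \<le> a \<omega>" unfolding a_def using p c_pos by simp
    have a1: "a \<omega> < 1" unfolding a_def using p c_pos by simp
    have l0: "lam \<omega> \<ge> 0" unfolding lam_def using a0 p by simp
    have "lam \<omega> * \<Delta> \<omega> * (\<kappa>Lg + K) = a \<omega> / (\<Delta> \<omega> * \<sigma>) * (\<Delta> \<omega> * \<sigma>)"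
      unfolding lam_def \<sigma>_def by simp
    also have "\<dots> = a \<omega>" using \<sigma>0 d by simp
    finally show ?thesis using a0 a1 l0 by simp
  qed
  have mgf: "(\<integral>\<^sup>+s. ennreal (exp (lam \<omega> * Dt \<omega> s)) \<partial>P) \<le> ennreal (exp (\<psi> \<omega>))" if "\<omega> \<in> space M" for \<omega>
    unfolding Dt_def \<psi>_def
    using aprops[OF that] \<Delta>_pos[OF that] X_dist[OF that] f_diff[OF that] \<kappa>Lg_pos
    by (intro mgf_bound[OF P F_int fdef \<kappa>FL_meas \<kappa>FL_nonneg F_Lip ki kb K0]) auto
  have indc: "(\<integral>\<^sup>+\<omega>. W \<omega> * ennreal (exp (lam \<omega> * S k \<omega> - real k * \<psi> \<omega>)) \<partial>M) \<le> (\<integral>\<^sup>+\<omega>. W \<omega> \<partial>M)"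
    if Wm: "W \<in> borel_measurable (Fk 0)" for W :: "'a \<Rightarrow> ennreal" and k
  proof (induction k)
    case 0 show ?case by (simp add: S_def)
  next
    case (Suc k)
    define H where "H \<omega> = W \<omega> * ennreal (exp (lam \<omega> * S k \<omega> - real (Suc k) * \<psi> \<omega>))" for \<omega>
    have Wk: "W \<in> borel_measurable (Fk k)" using lift[OF _ Wm] by simp
    have lamk: "lam \<in> borel_measurable (Fk k)" using lift[OF _ lamm] by simp
    have \<psi>k: "\<psi> \<in> borel_measurable (Fk k)" using lift[OF _ \<psi>m] by simp
    have Sk: "S k \<in> borel_measurable (Fk k)" by (rule Sm)
    have Hm: "H \<in> borel_measurable (Fk k)" unfolding H_def using Wk lamk \<psi>k Sk by measurable
    have hm: "(\<lambda>p. H (fst p) * ennreal (exp (lam (fst p) * Dt (fst p) (snd p)))) \<in> borel_measurable (Fk k \<Otimes>\<^sub>M P)"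
      using Hm lamk Dtm[of k] by measurable
    have xm: "\<xi> (Suc k) \<in> measurable M P" using liftM[OF \<xi>_meas[of "Suc k"]] by simp
    have ind: "prob_space.indep_set M (sets (Fk k)) {\<xi> (Suc k) -` A \<inter> space M | A. A \<in> sets P}"
      using \<xi>_indep[of "Suc k"] by simp
    note fr = freeze[OF M P sub[of k] xm \<xi>_law[of "Suc k"] ind hm]
    have "(\<integral>\<^sup>+\<omega>. W \<omega> * ennreal (exp (lam \<omega> * S (Suc k) \<omega> - real (Suc k) * \<psi> \<omega>)) \<partial>M)
        = (\<integral>\<^sup>+\<omega>. H \<omega> * ennreal (exp (lam \<omega> * Dt \<omega> (\<xi> (Suc k) \<omega>))) \<partial>M)"
    proof (rule nn_integral_cong)
      fix \<omega>
      have "S (Suc k) \<omega> = S k \<omega> + Dt \<omega> (\<xi> (Suc k) \<omega>)" by (simp add: S_def)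
      then have "exp (lam \<omega> * S (Suc k) \<omega> - real (Suc k) * \<psi> \<omega>)
          = exp (lam \<omega> * S k \<omega> - real (Suc k) * \<psi> \<omega>) * exp (lam \<omega> * Dt \<omega> (\<xi> (Suc k) \<omega>))"
        by (simp add: exp_add[symmetric] algebra_simps)
      then show "W \<omega> * ennreal (exp (lam \<omega> * S (Suc k) \<omega> - real (Suc k) * \<psi> \<omega>))
          = H \<omega> * ennreal (exp (lam \<omega> * Dt \<omega> (\<xi> (Suc k) \<omega>)))"
        by (simp add: H_def ennreal_mult mult.assoc)
    qed
    also have "\<dots> = (\<integral>\<^sup>+\<omega>. (\<integral>\<^sup>+s. H \<omega> * ennreal (exp (lam \<omega> * Dt \<omega> s)) \<partial>P) \<partial>M)"
      using fr by simp
    also have "\<dots> = (\<integral>\<^sup>+\<omega>. H \<omega> * (\<integral>\<^sup>+s. ennreal (exp (lam \<omega> * Dt \<omega> s)) \<partial>P) \<partial>M)"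
    proof (rule nn_integral_cong)
      fix \<omega>
      have "(\<lambda>s. ennreal (exp (lam \<omega> * Dt \<omega> s))) \<in> borel_measurable P"
        unfolding Dt_def using Fm[of "X0 \<omega>"] Fm[of "Xi \<omega>"] by measurable
      then show "(\<integral>\<^sup>+s. H \<omega> * ennreal (exp (lam \<omega> * Dt \<omega> s)) \<partial>P) = H \<omega> * (\<integral>\<^sup>+s. ennreal (exp (lam \<omega> * Dt \<omega> s)) \<partial>P)"
        by (rule nn_integral_cmult)
    qed
    also have "\<dots> \<le> (\<integral>\<^sup>+\<omega>. H \<omega> * ennreal (exp (\<psi> \<omega>)) \<partial>M)"
      by (intro nn_integral_mono mult_left_mono mgf) auto
    also have "\<dots> = (\<integral>\<^sup>+\<omega>. W \<omega> * ennreal (exp (lam \<omega> * S k \<omega> - real k * \<psi> \<omega>)) \<partial>M)"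
    proof (rule nn_integral_cong)
      fix \<omega>
      have "exp (lam \<omega> * S k \<omega> - real (Suc k) * \<psi> \<omega>) * exp (\<psi> \<omega>) = exp (lam \<omega> * S k \<omega> - real k * \<psi> \<omega>)"
        by (simp add: exp_add[symmetric] algebra_simps)
      then show "H \<omega> * ennreal (exp (\<psi> \<omega>)) = W \<omega> * ennreal (exp (lam \<omega> * S k \<omega> - real k * \<psi> \<omega>))"
        by (simp add: H_def mult.assoc ennreal_mult[symmetric])
    qed
    also have "\<dots> \<le> (\<integral>\<^sup>+\<omega>. W \<omega> \<partial>M)" by (rule Suc.IH)
    finally show ?case .
  qed
  define A where "A = {\<omega>\<in>space M. real n * c \<le> S n \<omega>}"
  have AM: "A \<in> sets M" unfolding A_def using liftM[OF Sm[of n]] by measurable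
  have gM: "g \<in> borel_measurable M" using liftM[OF gm] .
  have g0: "g \<omega> \<ge> 0" for \<omega> by (simp add: g_def)
  have g1: "g \<omega> \<le> 1" if "\<omega> \<in> space M" for \<omega>
  proof -
    have d: "\<Delta> \<omega> > 0" using \<Delta>_pos[OF that] .
    have "2 * (\<Delta> \<omega> * \<sigma> * c + (\<Delta> \<omega>)\<^sup>2 * \<sigma>\<^sup>2) > 0" using d \<sigma>0 c_pos by (intro mult_pos_pos add_pos_pos) auto
    then have "- (real n * c\<^sup>2) / (2 * (\<Delta> \<omega> * \<sigma> * c + (\<Delta> \<omega>)\<^sup>2 * \<sigma>\<^sup>2)) \<le> 0"
      by (intro divide_nonpos_pos) auto
    then show ?thesis unfolding g_def by simp
  qed
  have gint: "integrable M g"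
    using gM g0 g1 by (intro M.integrable_const_bound[where B=1]) auto
  have key: "measure M (A \<inter> B) \<le> (\<integral>\<omega>. indicator B \<omega> * g \<omega> \<partial>M)" if B: "B \<in> sets (Fk 0)" for B
  proof -
    have BM: "B \<in> sets M" using sM B by auto
    define W where "W \<omega> = ennreal (indicator B \<omega> * g \<omega>)" for \<omega>
    have Wm: "W \<in> borel_measurable (Fk 0)" unfolding W_def using B gm by measurable
    have pw: "indicator (A \<inter> B) \<omega> \<le> W \<omega> * ennreal (exp (lam \<omega> * S n \<omega> - real n * \<psi> \<omega>))" if \<omega>: "\<omega> \<in> space M" for \<omega>
    proof (cases "\<omega> \<in> A \<inter> B")
      case False then show ?thesis by simp
    next
      case True
      define x where "x = \<Delta> \<omega> * \<sigma>"
      have x0: "x > 0" using \<Delta>_pos[OF \<omega>] \<sigma>0 by (simp add: x_def)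
      note ap = aprops[OF \<omega>]
      have ae: "a \<omega> = c / (x + c)" by (simp add: a_def x_def)
      have le: "lam \<omega> = c / (x * (x + c))" using x0 c_pos by (simp add: lam_def ae x_def[symmetric])
      have "\<psi> \<omega> = (a \<omega>)\<^sup>2 / (2 * (1 - a \<omega>))" using ap by (simp add: \<psi>_def)
      also have "\<dots> = c\<^sup>2 / (2 * x * (x + c))" unfolding ae by (rule psi_alg[OF x0 c_pos])
      finally have pe: "\<psi> \<omega> = c\<^sup>2 / (2 * x * (x + c))" .
      have den: "\<Delta> \<omega> * \<sigma> * c + (\<Delta> \<omega>)\<^sup>2 * \<sigma>\<^sup>2 = x * (x + c)"
        by (simp add: x_def power2_eq_square algebra_simps)
      have ex: "- (real n * c\<^sup>2) / (2 * (\<Delta> \<omega> * \<sigma> * c + (\<Delta> \<omega>)\<^sup>2 * \<sigma>\<^sup>2)) + (lam \<omega> * S n \<omega> - real n * \<psi> \<omega>)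
          = lam \<omega> * (S n \<omega> - real n * c)"
        unfolding den pe le by (rule ex_alg[OF x0 c_pos])
      have Sge: "S n \<omega> - real n * c \<ge> 0" using True by (simp add: A_def)
      have "1 \<le> exp (lam \<omega> * (S n \<omega> - real n * c))" using ap Sge by simp
      also have "\<dots> = g \<omega> * exp (lam \<omega> * S n \<omega> - real n * \<psi> \<omega>)"
        unfolding g_def ex[symmetric] by (rule exp_add)
      finally have "1 \<le> g \<omega> * exp (lam \<omega> * S n \<omega> - real n * \<psi> \<omega>)" .
      then have "ennreal 1 \<le> ennreal (g \<omega> * exp (lam \<omega> * S n \<omega> - real n * \<psi> \<omega>))" by (rule ennreal_leI)
      then show ?thesis using True g0 by (simp add: W_def ennreal_mult)
    qed
    have "emeasure M (A \<inter> B) = (\<integral>\<^sup>+\<omega>. indicator (A \<inter> B) \<omega> \<partial>M)" using AM BM by simp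
    also have "\<dots> \<le> (\<integral>\<^sup>+\<omega>. W \<omega> * ennreal (exp (lam \<omega> * S n \<omega> - real n * \<psi> \<omega>)) \<partial>M)"
      by (intro nn_integral_mono pw)
    also have "\<dots> \<le> (\<integral>\<^sup>+\<omega>. W \<omega> \<partial>M)" by (rule indc[OF Wm])
    also have "\<dots> = ennreal (\<integral>\<omega>. indicator B \<omega> * g \<omega> \<partial>M)"
      unfolding W_def using g0 integrable_mult_indicator[OF BM gint] by (intro nn_integral_eq_integral) auto
    finally have "ennreal (measure M (A \<inter> B)) \<le> ennreal (\<integral>\<omega>. indicator B \<omega> * g \<omega> \<partial>M)"
      by (simp add: M.emeasure_eq_measure)
    moreover have "(\<integral>\<omega>. indicator B \<omega> * g \<omega> \<partial>M) \<ge> 0" using g0 by (intro integral_nonneg_AE) auto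
    ultimately show ?thesis by (simp add: ennreal_le_iff)
  qed
  have sfs: "sigma_finite_subalgebra M (Fk 0)"
  proof (rule finite_measure_subalgebra_is_sigma_finite)
    show "finite_measure_subalgebra M (Fk 0)"
      unfolding finite_measure_subalgebra_def finite_measure_subalgebra_axioms_def
      using sub[of 0] M.finite_measure_axioms by simp
  qed
  interpret FS: sigma_finite_subalgebra M "Fk 0" by (rule sfs)
  define h where "h = real_cond_exp M (Fk 0) (indicator A)"
  have iA: "integrable M (indicator A :: 'a \<Rightarrow> real)"
    using AM by (intro integrable_real_indicator) (auto simp: M.emeasure_eq_measure)
  have hint: "integrable M h" unfolding h_def by (rule FS.real_cond_exp_int(1)[OF iA])
  have hm: "h \<in> borel_measurable (Fk 0)" unfolding h_def by (rule borel_measurable_cond_exp)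
  have hB: "(\<integral>\<omega>. indicator B \<omega> * h \<omega> \<partial>M) = measure M (A \<inter> B)" if B: "B \<in> sets (Fk 0)" for B
  proof -
    have BM: "B \<in> sets M" using sM B by auto
    have "(\<integral>\<omega>. indicator B \<omega> * h \<omega> \<partial>M) = (\<integral>x\<in>B. h x \<partial>M)"
      by (simp add: set_lebesgue_integral_def)
    also have "\<dots> = (\<integral>x\<in>B. indicator A x \<partial>M)"
      unfolding h_def by (rule FS.real_cond_exp_intA[OF iA B, symmetric])
    also have "\<dots> = (\<integral>x. indicator (A \<inter> B) x \<partial>M)"
      by (simp add: set_lebesgue_integral_def indicator_inter_arith mult.commute)
    also have "\<dots> = measure M (A \<inter> B)" using AM BM by simp
    finally show ?thesis .
  qed
  define B0 where "B0 = {\<omega> \<in> space M. g \<omega> < h \<omega>}"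
  have B0m: "B0 \<in> sets (Fk 0)"
  proof -
    have "B0 = {\<omega> \<in> space (Fk 0). g \<omega> < h \<omega>}" by (simp add: B0_def spc)
    also have "\<dots> \<in> sets (Fk 0)" using gm hm by measurable
    finally show ?thesis .
  qed
  have B0M: "B0 \<in> sets M" using sM B0m by auto
  have i1: "integrable M (\<lambda>\<omega>. indicator B0 \<omega> * h \<omega>)" using integrable_mult_indicator[OF B0M hint] by simp
  have i2: "integrable M (\<lambda>\<omega>. indicator B0 \<omega> * g \<omega>)" using integrable_mult_indicator[OF B0M gint] by simp
  have nn: "0 \<le> indicator B0 \<omega> * (h \<omega> - g \<omega>)" for \<omega>
    by (cases "\<omega> \<in> B0") (auto simp: B0_def)
  have "(\<integral>\<omega>. indicator B0 \<omega> * (h \<omega> - g \<omega>) \<partial>M)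
      = (\<integral>\<omega>. indicator B0 \<omega> * h \<omega> \<partial>M) - (\<integral>\<omega>. indicator B0 \<omega> * g \<omega> \<partial>M)"
    using i1 i2 by (simp add: right_diff_distrib)
  also have "\<dots> \<le> 0" using hB[OF B0m] key[OF B0m] by simp
  finally have le0: "(\<integral>\<omega>. indicator B0 \<omega> * (h \<omega> - g \<omega>) \<partial>M) \<le> 0" .
  have i3: "integrable M (\<lambda>\<omega>. indicator B0 \<omega> * (h \<omega> - g \<omega>))"
    using i1 i2 by (simp add: right_diff_distrib)
  have "(\<integral>\<omega>. indicator B0 \<omega> * (h \<omega> - g \<omega>) \<partial>M) = 0"
    using le0 nn by (intro antisym integral_nonneg_AE) auto
  then have "AE \<omega> in M. indicator B0 \<omega> * (h \<omega> - g \<omega>) = 0"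
    using integral_nonneg_eq_0_iff_AE[OF i3] nn by simp
  then have fin: "AE \<omega> in M. h \<omega> \<le> g \<omega>"
  proof (rule AE_mp, intro AE_I2 impI)
    fix \<omega> assume \<omega>: "\<omega> \<in> space M" and z: "indicator B0 \<omega> * (h \<omega> - g \<omega>) = 0"
    show "h \<omega> \<le> g \<omega>"
    proof (rule ccontr)
      assume "\<not> h \<omega> \<le> g \<omega>"
      then have "\<omega> \<in> B0" using \<omega> by (simp add: B0_def)
      then show False using z \<open>\<not> h \<omega> \<le> g \<omega>\<close> by simp
    qed
  qed
  show ?thesis using fin unfolding h_def A_def S_def Dt_def g_def \<sigma>_def K_def .
qed


end
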